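(* If $A\in\mathfrak{B}_{n\times m}$ is a canonical matrix, then $A$ is semi-canonical.
   Context: $\mathfrak{B}_{n\times m}$ denotes the set of all $n\times m$ matrices with entries in $\{0,1\}$. For $A=[a_{ij}]\in\mathfrak{B}_{n\times m}$, $r(A)=\langle x_1,\dots,x_n\rangle$ with $x_i=\sum_{j=1}^m a_{ij}2^{m-j}$ and $c(A)=\langle y_1,\dots,y_m\rangle$ with $y_j=\sum_{i=1}^n a_{ij}2^{n-i}$; tuples are compared lexicographically. $A\sim B$ means $A=XBY$ for some permutation matrices $X$ ($n\times n$) and $Y$ ($m\times m$). $A$ is canonical if $r(A)$ is the lexicographically minimal element of $\{r(B)\mid B\sim A\}$. $A$ is semi-canonical if $x_1\le\cdots\le x_n$ and $y_1\le\cdots\le y_m$. *)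

theory Defs
  imports Main "HOL-Combinatorics.Permutations"
begin

text \<open>An n x m binary matrix is represented as a function A :: nat => nat => nat
  with 0-based indices; only entries with i < n, j < m matter, and they lie in {0,1}.\<close>

definition binmat :: "nat \<Rightarrow> nat \<Rightarrow> (nat \<Rightarrow> nat \<Rightarrow> nat) \<Rightarrow> bool" where
  "binmat n m A \<longleftrightarrow> (\<forall>i<n. \<forall>j<m. A i j \<in> {0, 1})"

text \<open>Row code x_i = sum_j a_ij 2^(m-j) (1-based j), i.e. with 0-based j: 2^(m-1-j).\<close>
definition row_code :: "nat \<Rightarrow> (nat \<Rightarrow> nat \<Rightarrow> nat) \<Rightarrow> nat \<Rightarrow> nat" where
  "row_code m A i = (\<Sum>j<m. A i j * 2 ^ (m - 1 - j))"

definition col_code :: "nat \<Rightarrow> (nat \<Rightarrow> nat \<Rightarrow> nat) \<Rightarrow> nat \<Rightarrow> nat" where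
  "col_code n A j = (\<Sum>i<n. A i j * 2 ^ (n - 1 - i))"

definition rvec :: "nat \<Rightarrow> nat \<Rightarrow> (nat \<Rightarrow> nat \<Rightarrow> nat) \<Rightarrow> nat list" where
  "rvec n m A = map (row_code m A) [0..<n]"

definition cvec :: "nat \<Rightarrow> nat \<Rightarrow> (nat \<Rightarrow> nat \<Rightarrow> nat) \<Rightarrow> nat list" where
  "cvec n m A = map (col_code n A) [0..<m]"

text \<open>A ~ B: A = X B Y for permutation matrices X, Y, i.e. A is obtained from B
  by permuting rows and columns.\<close>
definition perm_equiv :: "nat \<Rightarrow> nat \<Rightarrow> (nat \<Rightarrow> nat \<Rightarrow> nat) \<Rightarrow> (nat \<Rightarrow> nat \<Rightarrow> nat) \<Rightarrow> bool" where
  "perm_equiv n m A B \<longleftrightarrow>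
     (\<exists>p q. p permutes {..<n} \<and> q permutes {..<m} \<and>
            (\<forall>i<n. \<forall>j<m. A i j = B (p i) (q j)))"

definition lex_le :: "nat list \<Rightarrow> nat list \<Rightarrow> bool" where
  "lex_le xs ys \<longleftrightarrow> lexordp_eq xs ys"

definition canonical :: "nat \<Rightarrow> nat \<Rightarrow> (nat \<Rightarrow> nat \<Rightarrow> nat) \<Rightarrow> bool" where
  "canonical n m A \<longleftrightarrow>
     (\<forall>B. binmat n m B \<and> perm_equiv n m B A \<longrightarrow> lex_le (rvec n m A) (rvec n m B))"

definition semi_canonical :: "nat \<Rightarrow> nat \<Rightarrow> (nat \<Rightarrow> nat \<Rightarrow> nat) \<Rightarrow> bool" where
  "semi_canonical n m A \<longleftrightarrow> sorted (rvec n m A) \<and> sorted (cvec n m A)"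

end

theory Submission
  imports Defs
begin

lemma S_Suc: "(\<Sum>t<Suc n. (d::nat\<Rightarrow>nat) t * 2 ^ (Suc n - 1 - t)) = 2 * (\<Sum>t<n. d t * 2 ^ (n - 1 - t)) + d n"
proof -
  have "(\<Sum>t<n. d t * 2 ^ (Suc n - 1 - t)) = (\<Sum>t<n. 2 * (d t * 2 ^ (n - 1 - t)))"
  proof (rule sum.cong)
    fix t assume "t \<in> {..<n}"
    then have "Suc n - 1 - t = Suc (n - 1 - t)" by auto
    then show "d t * 2 ^ (Suc n - 1 - t) = 2 * (d t * 2 ^ (n - 1 - t))" by simp
  qed simp
  then show ?thesis by (simp add: sum_distrib_left)
qed

lemma S_less:
  fixes u v :: "nat \<Rightarrow> nat"
  assumes "\<forall>t<k. u t = v t" "u k < v k" "k < n" "\<forall>t<n. u t \<le> 1" "\<forall>t<n. v t \<le> 1"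
  shows "(\<Sum>t<n. u t * 2 ^ (n - 1 - t)) < (\<Sum>t<n. v t * 2 ^ (n - 1 - t))"
  using assms(3-5)
proof (induction n)
  case 0 then show ?case by simp
next
  case (Suc n)
  show ?case
  proof (cases "k = n")
    case True
    have "(\<Sum>t<n. u t * 2 ^ (n - 1 - t)) = (\<Sum>t<n. v t * 2 ^ (n - 1 - t))"
      using assms(1) True by (intro sum.cong) auto
    then show ?thesis using S_Suc[of u n] S_Suc[of v n] assms(2) True by simp
  next
    case False
    then have "k < n" using Suc by simp
    then have "(\<Sum>t<n. u t * 2 ^ (n - 1 - t)) < (\<Sum>t<n. v t * 2 ^ (n - 1 - t))"
      using Suc by auto
    moreover have "u n \<le> 1" "v n \<ge> 0" using Suc by auto
    ultimately show ?thesis using S_Suc[of u n] S_Suc[of v n] by linarith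
  qed
qed

lemma lex_map:
  fixes f g :: "nat \<Rightarrow> nat"
  assumes "k < n" "\<forall>i<k. f i = g i" "f k < g k"
  shows "ord_class.lexordp (map f [0..<n]) (map g [0..<n])"
proof -
  have sp: "[0..<n] = [0..<k] @ k # [Suc k..<n]"
    using assms(1) by (metis le_add1 less_imp_add_positive upt_add_eq_append upt_conv_Cons add_0)
  have "map g [0..<k] = map f [0..<k]" using assms(2) by simp
  then show ?thesis unfolding lexordp_iff sp using assms(3)
    by (intro disjI2 exI[of _ "map f [0..<k]"]) auto
qed

lemma not_canon:
  assumes "canonical n m A" "binmat n m B" "perm_equiv n m B A"
    "ord_class.lexordp (rvec n m B) (rvec n m A)"
  shows False
  using assms unfolding canonical_def lex_le_def
  by (meson lexordp_conv_lexordp_eq)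

theorem corollary2:
  fixes n m :: nat and A :: "nat \<Rightarrow> nat \<Rightarrow> nat"
  assumes "binmat n m A" and "canonical n m A"
  shows "semi_canonical n m A"
proof -
  have bin: "\<And>i j. i < n \<Longrightarrow> j < m \<Longrightarrow> A i j \<le> 1" using assms(1) unfolding binmat_def by fastforce
  have rows: "row_code m A i \<le> row_code m A (Suc i)" if "Suc i < n" for i
  proof (rule ccontr)
    assume c: "\<not> ?thesis"
    define p where "p = Transposition.transpose i (Suc i)"
    define B where "B = (\<lambda>r c. A (p r) c)"
    have pp: "p permutes {..<n}" unfolding p_def using that by (intro permutes_swap_id) auto
    have pn: "r < n \<Longrightarrow> p r < n" for r using permutes_in_image[OF pp] by auto
    have "binmat n m B" using assms(1) pn unfolding binmat_def B_def by auto
    moreover have "perm_equiv n m B A" unfolding perm_equiv_def B_def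
      by (intro exI[of _ p] exI[of _ id]) (auto simp: pp permutes_id)
    moreover have "ord_class.lexordp (rvec n m B) (rvec n m A)" unfolding rvec_def
    proof (rule lex_map[of i])
      show "\<forall>r<i. row_code m B r = row_code m A r"
        unfolding B_def p_def row_code_def by (auto simp: transpose_def)
      show "row_code m B i < row_code m A i"
        using c unfolding B_def p_def row_code_def by (auto simp: transpose_def)
    qed (use that in auto)
    ultimately show False using not_canon[OF assms(2)] by blast
  qed
  have cols: "col_code n A j \<le> col_code n A (Suc j)" if "Suc j < m" for j
  proof (rule ccontr)
    assume c: "\<not> ?thesis"
    then have ne: "col_code n A j \<noteq> col_code n A (Suc j)" by simp
    have ex: "\<exists>r<n. A r j \<noteq> A r (Suc j)"
    proof (rule ccontr)
      assume "\<not> ?thesis"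
      then have "col_code n A j = col_code n A (Suc j)" unfolding col_code_def
        by (intro sum.cong) auto
      with ne show False by simp
    qed
    define i where "i = (LEAST r. r < n \<and> A r j \<noteq> A r (Suc j))"
    have i: "i < n" "A i j \<noteq> A i (Suc j)" using LeastI_ex[OF ex] unfolding i_def by auto
    have bef: "\<forall>r<i. A r j = A r (Suc j)"
      using not_less_Least i(1) unfolding i_def by fastforce
    have ai: "A i j = 1 \<and> A i (Suc j) = 0"
    proof (rule ccontr)
      assume "\<not> ?thesis"
      then have "A i j < A i (Suc j)" using i bin[of i j] bin[of i "Suc j"] that by auto
      then have "col_code n A j < col_code n A (Suc j)" unfolding col_code_def
        using S_less[of i "\<lambda>r. A r j" "\<lambda>r. A r (Suc j)" n] bef i(1) bin that by auto
      with c show False by simp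
    qed
    define q where "q = Transposition.transpose j (Suc j)"
    define B where "B = (\<lambda>r c. A r (q c))"
    have qq: "q permutes {..<m}" unfolding q_def using that by (intro permutes_swap_id) auto
    have qm: "c < m \<Longrightarrow> q c < m" for c using permutes_in_image[OF qq] by auto
    have "binmat n m B" using assms(1) qm unfolding binmat_def B_def by auto
    moreover have "perm_equiv n m B A" unfolding perm_equiv_def B_def
      by (intro exI[of _ id] exI[of _ q]) (auto simp: qq permutes_id)
    moreover have "ord_class.lexordp (rvec n m B) (rvec n m A)" unfolding rvec_def
    proof (rule lex_map[of i])
      show "\<forall>r<i. row_code m B r = row_code m A r"
      proof (intro allI impI)
        fix r assume "r < i"
        then have "A r j = A r (Suc j)" using bef by auto
        then show "row_code m B r = row_code m A r"
          unfolding B_def q_def row_code_def by (intro sum.cong) (auto simp: transpose_def)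
      qed
      have "B i j < A i j" using ai unfolding B_def q_def by (simp add: transpose_def)
      moreover have "\<forall>t<j. B i t = A i t" unfolding B_def q_def by (auto simp: transpose_def)
      moreover have "\<forall>t<m. B i t \<le> 1" using bin i(1) qm unfolding B_def by auto
      ultimately show "row_code m B i < row_code m A i" unfolding row_code_def
        using S_less[of j "B i" "A i" m] bin i(1) that by auto
    qed (use i in auto)
    ultimately show False using not_canon[OF assms(2)] by blast
  qed
  show ?thesis unfolding semi_canonical_def sorted_iff_nth_Suc rvec_def cvec_def
    using rows cols by auto
qed

end
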